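(* Let $\mathcal{G}=(\mathcal{V},\mathcal{E},w)$ be a simple connected weighted graph with at least one edge and with $d(v)\ge 1$ for all $v\in\mathcal{V}$. Let $s\in\mathcal{V}$, $\beta\in(0,1)$, and let $x$ solve $Tx=\beta r$ with $T=\beta D+D^{-1}L$ and $r$ the indicator vector of $s$. Then for every proper subset $\mathcal{C}\subsetneq\mathcal{V}$ with $s\in\mathcal{C}$, $$x[\bar{\mathcal{C}}]<\frac{1}{\beta}\,w(\partial(\mathcal{C})).$$
   Context: $d(v)=\sum_{u\sim v}w(u,v)$ is the weighted degree, $D=\operatorname{diag}(d(v))$, $L=D-A$ the combinatorial Laplacian. $r(s)=1$, $r(v)=0$ for $v\ne s$. For $\mathcal{S}\subseteq\mathcal{V}$, $\bar{\mathcal{S}}=\mathcal{V}\setminus\mathcal{S}$, $x[\mathcal{S}]=\sum_{v\in\mathcal{S}}x(v)$, $\partial(\mathcal{S})=\{\{u,v\}\in\mathcal{E}: u\in\mathcal{S},v\in\bar{\mathcal{S}}\}$ and $w(\partial(\mathcal{S}))=\sum_{e\in\partial(\mathcal{S})}w(e)$. *)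

theory Defs
  imports Main "HOL-Analysis.Analysis"
begin

definition simple_wgraph :: "'a set \<Rightarrow> 'a set set \<Rightarrow> ('a set \<Rightarrow> real) \<Rightarrow> bool" where
  "simple_wgraph V E w \<longleftrightarrow> finite V \<and> (\<forall>e\<in>E. e \<subseteq> V \<and> card e = 2 \<and> w e > 0)"

definition graph_connected :: "'a set \<Rightarrow> 'a set set \<Rightarrow> bool" where
  "graph_connected V E \<longleftrightarrow>
     (\<forall>u\<in>V. \<forall>v\<in>V. (u, v) \<in> {(a, b). {a, b} \<in> E}\<^sup>*)"

definition wdeg :: "'a set set \<Rightarrow> ('a set \<Rightarrow> real) \<Rightarrow> 'a \<Rightarrow> real" where
  "wdeg E w v = (\<Sum>e\<in>{e\<in>E. v \<in> e}. w e)"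

definition adjw :: "'a set set \<Rightarrow> ('a set \<Rightarrow> real) \<Rightarrow> 'a \<Rightarrow> 'a \<Rightarrow> real" where
  "adjw E w u v = (if {u, v} \<in> E then w {u, v} else 0)"

definition lap_apply :: "'a set \<Rightarrow> 'a set set \<Rightarrow> ('a set \<Rightarrow> real) \<Rightarrow> ('a \<Rightarrow> real) \<Rightarrow> 'a \<Rightarrow> real" where
  "lap_apply V E w x v = wdeg E w v * x v - (\<Sum>u\<in>V. adjw E w v u * x u)"

definition T_apply :: "'a set \<Rightarrow> 'a set set \<Rightarrow> ('a set \<Rightarrow> real) \<Rightarrow> real \<Rightarrow> ('a \<Rightarrow> real) \<Rightarrow> 'a \<Rightarrow> real" where
  "T_apply V E w \<beta> x v = \<beta> * wdeg E w v * x v + lap_apply V E w x v / wdeg E w v"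

definition ind_vec :: "'a \<Rightarrow> 'a \<Rightarrow> real" where
  "ind_vec s v = (if v = s then 1 else 0)"

definition edge_boundary :: "'a set \<Rightarrow> 'a set set \<Rightarrow> 'a set \<Rightarrow> 'a set set" where
  "edge_boundary V E S = {e\<in>E. \<exists>u\<in>S. \<exists>v\<in>V - S. e = {u, v}}"

end

theory Submission
  imports Defs
begin

lemma deg_sum:
  assumes fin: "finite V" and G: "\<forall>e\<in>E. e \<subseteq> V \<and> card e = 2 \<and> w e > 0" and v: "v \<in> V"
  shows "wdeg E w v = (\<Sum>u\<in>V. adjw E w v u)"
proof -
  have "(\<Sum>u\<in>V. adjw E w v u) = (\<Sum>u\<in>{u\<in>V. {v,u}\<in>E}. w {v,u})"
    unfolding adjw_def using fin by (simp add: sum.inter_filter)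
  also have "\<dots> = (\<Sum>e\<in>(\<lambda>u. {v,u}) ` {u\<in>V. {v,u}\<in>E}. w e)"
    by (rule sum.reindex[symmetric, unfolded comp_def]) (auto simp: inj_on_def doubleton_eq_iff)
  also have "(\<lambda>u. {v,u}) ` {u\<in>V. {v,u}\<in>E} = {e\<in>E. v \<in> e}"
  proof
    show "{e\<in>E. v \<in> e} \<subseteq> (\<lambda>u. {v,u}) ` {u\<in>V. {v,u}\<in>E}"
    proof
      fix e assume e: "e \<in> {e\<in>E. v \<in> e}"
      then have "card e = 2" "e \<subseteq> V" using G by auto
      then obtain a b where ab: "e = {a,b}" "a \<noteq> b" by (auto simp: card_2_iff)
      show "e \<in> (\<lambda>u. {v,u}) ` {u\<in>V. {v,u}\<in>E}"
      proof (cases "v = a")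
        case True then show ?thesis using e ab \<open>e \<subseteq> V\<close> by (auto intro!: image_eqI[where x=b])
      next
        case False then have "v = b" using e ab by auto
        then show ?thesis using e ab \<open>e \<subseteq> V\<close> by (auto simp: insert_commute intro!: image_eqI[where x=a])
      qed
    qed
  qed auto
  finally show ?thesis unfolding wdeg_def by simp
qed

lemma sym_cancel:
  fixes A :: "'a \<Rightarrow> 'a \<Rightarrow> real"
  assumes "finite B" and sym: "\<And>u v. A u v = A v u"
  shows "(\<Sum>v\<in>B. \<Sum>u\<in>B. A v u * (x v - x u)) = 0"
proof -
  have "(\<Sum>v\<in>B. \<Sum>u\<in>B. A v u * (x v - x u)) = (\<Sum>v\<in>B. \<Sum>u\<in>B. A v u * x v) - (\<Sum>v\<in>B. \<Sum>u\<in>B. A v u * x u)"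
    by (simp add: right_diff_distrib sum_subtractf)
  also have "(\<Sum>v\<in>B. \<Sum>u\<in>B. A v u * x u) = (\<Sum>u\<in>B. \<Sum>v\<in>B. A v u * x u)"
    by (rule sum.swap)
  also have "\<dots> = (\<Sum>v\<in>B. \<Sum>u\<in>B. A v u * x v)"
    using sym by simp
  finally show ?thesis by simp
qed

lemma boundary_sum:
  assumes fin: "finite V" and CV: "C \<subseteq> V"
  shows "(\<Sum>e\<in>edge_boundary V E C. w e) = (\<Sum>v\<in>V - C. \<Sum>u\<in>C. adjw E w v u)"
proof -
  have fC: "finite C" using fin CV finite_subset by blast
  let ?P = "{p\<in>(V - C) \<times> C. {fst p, snd p} \<in> E}"
  have "(\<Sum>v\<in>V - C. \<Sum>u\<in>C. adjw E w v u) = (\<Sum>p\<in>(V - C) \<times> C. adjw E w (fst p) (snd p))"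
    by (simp add: sum.cartesian_product split_def)
  also have "\<dots> = (\<Sum>p\<in>?P. w {fst p, snd p})"
    unfolding adjw_def using fin fC by (simp add: sum.inter_filter)
  also have "\<dots> = (\<Sum>e\<in>(\<lambda>p. {fst p, snd p}) ` ?P. w e)"
    by (rule sum.reindex[symmetric, unfolded comp_def]) (auto simp: inj_on_def doubleton_eq_iff)
  also have "(\<lambda>p. {fst p, snd p}) ` ?P = edge_boundary V E C"
    unfolding edge_boundary_def
  proof
    show "(\<lambda>p. {fst p, snd p}) ` ?P \<subseteq> {e \<in> E. \<exists>u\<in>C. \<exists>v\<in>V - C. e = {u, v}}"
    proof
      fix e assume "e \<in> (\<lambda>p. {fst p, snd p}) ` ?P"
      then obtain a b where "{a,b} \<in> E" "b \<in> C" "a \<in> V - C" "e = {a,b}" by auto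
      then show "e \<in> {e \<in> E. \<exists>u\<in>C. \<exists>v\<in>V - C. e = {u, v}}"
      proof -
        have "e = {b,a}" using \<open>e = {a,b}\<close> by (simp add: insert_commute)
        have h1: "e \<in> E" using \<open>{a,b} \<in> E\<close> \<open>e = {a,b}\<close> by simp
        have h2: "\<exists>u\<in>C. \<exists>v\<in>V - C. e = {u, v}"
          using \<open>e = {b,a}\<close> \<open>b \<in> C\<close> \<open>a \<in> V - C\<close> by (intro bexI) 
        show ?thesis using h1 h2 by simp
      qed
    qed
    show "{e \<in> E. \<exists>u\<in>C. \<exists>v\<in>V - C. e = {u, v}} \<subseteq> (\<lambda>p. {fst p, snd p}) ` ?P"
    proof
      fix e assume "e \<in> {e \<in> E. \<exists>u\<in>C. \<exists>v\<in>V - C. e = {u, v}}"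
      then obtain u v where uv: "e \<in> E" "u \<in> C" "v \<in> V - C" "e = {u,v}" by blast
      then show "e \<in> (\<lambda>p. {fst p, snd p}) ` ?P"
        by (intro image_eqI[where x="(v,u)"]) (auto simp: insert_commute)
    qed
  qed
  finally show ?thesis by simp
qed

lemma pos_cancel: "(d::real) \<ge> 1 \<Longrightarrow> 0 \<le> d * y \<Longrightarrow> 0 \<le> y"
  by (simp add: zero_le_mult_iff)

lemma pos_cancel2: "(d::real) \<ge> 1 \<Longrightarrow> d * y \<le> 0 \<Longrightarrow> y \<le> 0"
  by (simp add: mult_le_0_iff)

theorem mainTheorem5:
  fixes V :: "'a set" and E :: "'a set set" and w :: "'a set \<Rightarrow> real"
    and s :: 'a and \<beta> :: real and x :: "'a \<Rightarrow> real" and C :: "'a set"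
  assumes graph: "simple_wgraph V E w"
    and conn: "graph_connected V E"
    and edge: "E \<noteq> {}"
    and deg: "\<forall>v\<in>V. wdeg E w v \<ge> 1"
    and sV: "s \<in> V"
    and beta: "0 < \<beta>" "\<beta> < 1"
    and sol: "\<forall>v\<in>V. T_apply V E w \<beta> x v = \<beta> * ind_vec s v"
    and CV: "C \<subset> V" and sC: "s \<in> C"
  shows "(\<Sum>v\<in>V - C. x v) < (1 / \<beta>) * (\<Sum>e\<in>edge_boundary V E C. w e)"
proof -
  define d where "d = wdeg E w"
  define A where "A = adjw E w"
  have fin: "finite V" and G: "\<forall>e\<in>E. e \<subseteq> V \<and> card e = 2 \<and> w e > 0"
    using graph unfolding simple_wgraph_def by auto
  have fC: "finite C" using fin CV finite_subset by blast
  have Ann: "\<And>u v. A u v \<ge> 0" unfolding A_def adjw_def using G by auto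
  have Asym: "\<And>u v. A u v = A v u" unfolding A_def adjw_def by (simp add: insert_commute)
  have Lx: "\<And>v. v \<in> V \<Longrightarrow> lap_apply V E w x v = (\<Sum>u\<in>V. A v u * (x v - x u))"
  proof -
    fix v assume v: "v \<in> V"
    have "(\<Sum>u\<in>V. A v u * (x v - x u)) = (\<Sum>u\<in>V. A v u) * x v - (\<Sum>u\<in>V. A v u * x u)"
      by (simp add: right_diff_distrib sum_subtractf sum_distrib_right)
    then show "lap_apply V E w x v = (\<Sum>u\<in>V. A v u * (x v - x u))"
      unfolding lap_apply_def A_def using deg_sum[OF fin G v] by simp
  qed
  have lapeq: "\<And>v. v \<in> V \<Longrightarrow> lap_apply V E w x v = d v * (\<beta> * ind_vec s v - \<beta> * d v * x v)"
  proof -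
    fix v assume v: "v \<in> V"
    have dp: "d v \<ge> 1" using deg v unfolding d_def by auto
    have "\<beta> * d v * x v + lap_apply V E w x v / d v = \<beta> * ind_vec s v"
      using sol v unfolding T_apply_def d_def by auto
    then show "lap_apply V E w x v = d v * (\<beta> * ind_vec s v - \<beta> * d v * x v)"
      using dp by (simp add: field_simps)
  qed
  have dge: "\<And>v. v \<in> V \<Longrightarrow> d v \<ge> 1" using deg unfolding d_def by auto
  obtain m where m0: "m \<in> V" "x m = Min (x ` V)"
  proof -
    have "Min (x ` V) \<in> x ` V" using fin sV by (intro Min_in) auto
    then show ?thesis using that by auto
  qed
  have m: "m \<in> V" "\<forall>u\<in>V. x m \<le> x u" using m0 fin by auto
  have xnn: "\<forall>u\<in>V. x u \<ge> 0"
  proof -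
    have "lap_apply V E w x m \<le> 0" unfolding Lx[OF m(1)]
      by (rule sum_nonpos) (use m Ann in \<open>auto intro: mult_nonneg_nonpos\<close>)
    then have "d m * (\<beta> * ind_vec s m - \<beta> * d m * x m) \<le> 0" using lapeq[OF m(1)] by simp
    then have "\<beta> * ind_vec s m - \<beta> * d m * x m \<le> 0" using dge[OF m(1)]
      by (simp add: mult_le_0_iff)
    moreover have "ind_vec s m \<ge> 0" unfolding ind_vec_def by auto
    moreover have "\<beta> * ind_vec s m \<ge> 0" using beta \<open>ind_vec s m \<ge> 0\<close> by simp
    moreover have "\<beta> * d m * x m = \<beta> * (d m * x m)" by simp
    ultimately have "\<beta> * (d m * x m) \<ge> 0" by linarith
    then have "d m * x m \<ge> 0" using beta by (simp add: zero_le_mult_iff)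
    then have "x m \<ge> 0" using dge[OF m(1)] by (simp add: zero_le_mult_iff)
    then show ?thesis using m by force
  qed
  have P: "\<And>v. v \<in> V \<Longrightarrow> \<forall>u\<in>V. x u \<le> x v \<Longrightarrow> v \<noteq> s \<Longrightarrow> x v \<le> 0"
  proof -
    fix v assume v: "v \<in> V" "\<forall>u\<in>V. x u \<le> x v" "v \<noteq> s"
    have "lap_apply V E w x v \<ge> 0" unfolding Lx[OF v(1)]
      by (rule sum_nonneg) (use v Ann in auto)
    then have "d v * (- \<beta> * d v * x v) \<ge> 0" using lapeq[OF v(1)] v(3) by (simp add: ind_vec_def)
    then have "- \<beta> * d v * x v \<ge> 0" using dge[OF v(1)] by (rule pos_cancel[rotated])
    then have "\<beta> * (d v * x v) \<le> 0" by simp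
    then have "d v * x v \<le> 0" using beta by (simp add: mult_le_0_iff)
    then show "x v \<le> 0" using dge[OF v(1)] by (simp add: mult_le_0_iff)
  qed
  obtain t where t: "t \<in> V" "t \<noteq> s" "A s t > 0"
  proof -
    have "{e\<in>E. s \<in> e} \<noteq> {}"
    proof
      assume "{e\<in>E. s \<in> e} = {}"
      then have "wdeg E w s = 0" unfolding wdeg_def by (simp only: sum.empty)
      then show False using deg sV by auto
    qed
    then obtain e where e: "e \<in> E" "s \<in> e" by auto
    then have "card e = 2" "e \<subseteq> V" "w e > 0" using G by auto
    then obtain a b where ab: "e = {a,b}" "a \<noteq> b" by (auto simp: card_2_iff)
    show ?thesis
    proof (cases "s = a")
      case True then show ?thesis using that[of b] e ab \<open>e \<subseteq> V\<close> \<open>w e > 0\<close>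
        unfolding A_def adjw_def by auto
    next
      case False then have "s = b" using e ab by auto
      then show ?thesis using that[of a] e ab \<open>e \<subseteq> V\<close> \<open>w e > 0\<close>
        unfolding A_def adjw_def by (auto simp: insert_commute)
    qed
  qed
  obtain M where M0: "M \<in> V" "x M = Max (x ` V)"
  proof -
    have "Max (x ` V) \<in> x ` V" using fin sV by (intro Max_in) auto
    then show ?thesis using that by auto
  qed
  have M: "M \<in> V" "\<forall>u\<in>V. x u \<le> x M" using M0 fin by auto
  have "x M < 1"
  proof (cases "M = s")
    case False then show ?thesis using P[OF M] by auto
  next
    case True
    show ?thesis
    proof (rule ccontr)
      assume "\<not> x M < 1"
      then have xs: "x s \<ge> 1" using True by simp
      have "x t < x s"
      proof (rule ccontr)
        assume "\<not> x t < x s"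
        then have "\<forall>u\<in>V. x u \<le> x t" using M True by force
        then have "x t \<le> 0" using P[OF t(1)] t(2) by auto
        then show False using \<open>\<not> x t < x s\<close> xs by simp
      qed
      have "A s t * (x s - x t) \<le> (\<Sum>u\<in>V. A s u * (x s - x u))"
        by (rule member_le_sum) (use t M True Ann fin in auto)
      moreover have "A s t * (x s - x t) > 0" using t \<open>x t < x s\<close> by simp
      ultimately have "lap_apply V E w x s > 0" using Lx[OF sV] by simp
      moreover have "d s * (\<beta> * ind_vec s s - \<beta> * d s * x s) \<le> 0"
      proof -
        have "1 * 1 \<le> d s * x s" by (rule mult_mono) (use dge[OF sV] xs in auto)
        then have "\<beta> * 1 \<le> \<beta> * (d s * x s)" using beta by (intro mult_left_mono) auto
        then have "\<beta> - \<beta> * d s * x s \<le> 0" by (simp add: mult.assoc)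
        then show ?thesis using dge[OF sV] by (simp add: ind_vec_def mult_le_0_iff)
      qed
      ultimately show False using lapeq[OF sV] by simp
    qed
  qed
  then have xlt1: "\<forall>u\<in>V. x u < 1" using M by force
  obtain z0 where z0: "z0 \<in> V - C" using CV by auto
  have "(s, z0) \<in> {(a, b). {a, b} \<in> E}\<^sup>*" using conn sV z0 unfolding graph_connected_def by auto
  then have "z0 \<in> C \<or> (\<exists>y\<in>C. \<exists>z\<in>V - C. {y,z} \<in> E)"
  proof (induction rule: rtrancl_induct)
    case base then show ?case using sC by simp
  next
    case (step b c)
    then have "{b,c} \<in> E" by simp
    then have "c \<in> V" using G by auto
    then show ?case using step \<open>{b,c} \<in> E\<close> by blast
  qed
  then obtain y z where yz: "y \<in> C" "z \<in> V - C" "{y,z} \<in> E" using z0 by auto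
  have Azy: "A z y > 0" using yz G unfolding A_def adjw_def by (auto simp: insert_commute)
  let ?B = "V - C"
  have fB: "finite ?B" using fin by simp
  have CsubV: "C \<subseteq> V" using CV by auto
  have lapB: "\<And>v. v \<in> ?B \<Longrightarrow> lap_apply V E w x v = - \<beta> * (d v * d v * x v)"
  proof -
    fix v assume v: "v \<in> ?B"
    then have "v \<noteq> s" using sC by auto
    then show "lap_apply V E w x v = - \<beta> * (d v * d v * x v)"
      using lapeq[of v] v by (simp add: ind_vec_def algebra_simps)
  qed
  have split: "\<And>v. v \<in> ?B \<Longrightarrow> lap_apply V E w x v =
      (\<Sum>u\<in>C. A v u * (x v - x u)) + (\<Sum>u\<in>?B. A v u * (x v - x u))"
    using Lx sum.subset_diff[OF CsubV fin] by (simp add: add.commute)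
  have "(\<Sum>v\<in>?B. lap_apply V E w x v) = (\<Sum>v\<in>?B. \<Sum>u\<in>C. A v u * (x v - x u))
      + (\<Sum>v\<in>?B. \<Sum>u\<in>?B. A v u * (x v - x u))"
    using split by (simp add: sum.distrib)
  also have "(\<Sum>v\<in>?B. \<Sum>u\<in>?B. A v u * (x v - x u)) = 0"
    by (rule sym_cancel[OF fB Asym])
  finally have sumL: "(\<Sum>v\<in>?B. lap_apply V E w x v) = (\<Sum>v\<in>?B. \<Sum>u\<in>C. A v u * (x v - x u))" by simp
  have "\<beta> * (\<Sum>v\<in>?B. x v) \<le> \<beta> * (\<Sum>v\<in>?B. d v * d v * x v)"
  proof -
    have "\<And>v. v \<in> ?B \<Longrightarrow> x v \<le> d v * d v * x v"
    proof -
      fix v assume v: "v \<in> ?B"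
      have "1 * 1 \<le> d v * d v" by (rule mult_mono) (use dge[of v] v in auto)
      then have "1 * x v \<le> d v * d v * x v" using xnn v by (intro mult_right_mono) auto
      then show "x v \<le> d v * d v * x v" by simp
    qed
    then show ?thesis using beta by (intro mult_left_mono sum_mono) auto
  qed
  also have "\<dots> = - (\<Sum>v\<in>?B. lap_apply V E w x v)"
    using lapB by (simp add: sum_distrib_left sum_negf)
  also have "\<dots> = (\<Sum>v\<in>?B. \<Sum>u\<in>C. A v u * (x u - x v))"
    unfolding sumL by (simp add: sum_negf[symmetric] algebra_simps)
  also have "\<dots> \<le> (\<Sum>v\<in>?B. \<Sum>u\<in>C. A v u * x u)"
    by (intro sum_mono mult_left_mono) (use xnn Ann CsubV in auto)
  also have "\<dots> < (\<Sum>v\<in>?B. \<Sum>u\<in>C. A v u)"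
  proof -
    have le1: "\<And>v u. u \<in> C \<Longrightarrow> A v u * x u \<le> A v u"
    proof -
      fix v u assume "u \<in> C"
      then have "x u \<le> 1" using xlt1 CsubV by (meson less_imp_le subsetD)
      then show "A v u * x u \<le> A v u" using Ann[of v u] by (rule mult_left_le)
    qed
    show ?thesis
  proof (rule sum_strict_mono_ex1[OF fB])
    show "\<forall>v\<in>?B. (\<Sum>u\<in>C. A v u * x u) \<le> (\<Sum>u\<in>C. A v u)"
      using le1 by (auto intro!: sum_mono)
    show "\<exists>v\<in>?B. (\<Sum>u\<in>C. A v u * x u) < (\<Sum>u\<in>C. A v u)"
    proof (intro bexI[OF _ yz(2)] sum_strict_mono_ex1[OF fC])
      show "\<forall>u\<in>C. A z u * x u \<le> A z u"
        using le1 by auto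
      show "\<exists>u\<in>C. A z u * x u < A z u"
        using xlt1 Azy yz CsubV by (intro bexI[OF _ yz(1)]) auto
    qed
  qed
  qed
  also have "\<dots> = (\<Sum>e\<in>edge_boundary V E C. w e)"
    unfolding A_def using boundary_sum[OF fin CsubV] by simp
  finally have "\<beta> * (\<Sum>v\<in>?B. x v) < (\<Sum>e\<in>edge_boundary V E C. w e)" .
  then show ?thesis using beta by (simp add: field_simps)
qed

end
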